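(* Let $K\subset\mathbb{R}^n$ be a convex body, $H$ an $i$-dimensional linear subspace of $\mathbb{R}^n$ with $1\le i\le n-1$, and let $f:P_HK\to[0,\infty)$ be the concave function $f(y):=\mathrm{vol}\big(K\cap(y+H^\perp)\big)^{\frac{1}{n-i}}$. Let $y_0\in P_HK$ be such that $$\{(y,t):y\in P_HK,\ 0\le t\le f(y)\}=\mathrm{conv}\big((P_HK\times\{0\})\cup\{(y_0,\|f\|_\infty)\}\big).$$ Then for every $y\in P_HK$, $$K\cap(y+H^\perp)=z(y)+\big(1-\|y-y_0\|_{P_HK}\big)\big(K\cap(y_0+H^\perp)\big)$$ for some $z(y)\in\mathbb{R}^n$.
   Context: A convex body is a compact convex subset of $\mathbb{R}^n$ with non-empty interior. $P_H$ is orthogonal projection onto $H$; $\mathrm{vol}$ is $(n-i)$-dimensional Lebesgue measure on the affine subspace $y+H^\perp$; $\|f\|_\infty=\max f$; $\mathrm{conv}$ is convex hull. Here $\|y-y_0\|_{P_HK}:=\min\{\lambda\ge0: y\in y_0+\lambda(P_HK-y_0)\}$ is the Minkowski functional of $y-y_0$ with respect to $P_HK$ centered at $y_0$. *)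

theory Defs
  imports "HOL-Analysis.Analysis" "HOL-Probability.Probability"
begin

definition proj_onto :: "'a::euclidean_space set \<Rightarrow> 'a \<Rightarrow> 'a" where
  "proj_onto H x = (SOME h. h \<in> H \<and> x - h \<in> orthogonal_comp H)"

definition onb_of :: "'a::euclidean_space set \<Rightarrow> 'a set" where
  "onb_of V = (SOME B. B \<subseteq> V \<and> pairwise orthogonal B \<and> (\<forall>b\<in>B. norm b = 1) \<and> span B = V)"

text \<open>k-dimensional Lebesgue measure (k = dim V) of a set A lying in an affine
  subspace a + V: A is mapped isometrically to R^k via coordinates with respect to an
  orthonormal basis of V, and measured there by the product Lebesgue measure.\<close>
definition flat_vol :: "'a::euclidean_space set \<Rightarrow> 'a set \<Rightarrow> real" where
  "flat_vol V A = measure (PiM (onb_of V) (\<lambda>_. lborel))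
                     ((\<lambda>x. restrict (\<lambda>b. x \<bullet> b) (onb_of V)) ` A)"

text \<open>Minkowski functional of y - y0 with respect to C centred at y0.\<close>
definition mink_at :: "'a::real_vector set \<Rightarrow> 'a \<Rightarrow> 'a \<Rightarrow> real" where
  "mink_at C y0 y = Inf {l. l \<ge> 0 \<and> y \<in> (\<lambda>x. y0 + l *\<^sub>R (x - y0)) ` C}"

end

theory Submission
  imports Defs
begin

lemma comp_meas: "i \<in> I \<Longrightarrow> (\<lambda>x. x i) \<in> borel_measurable (PiM I (\<lambda>_. lborel::real measure))"
  using measurable_component_singleton[of i I "\<lambda>_. lborel::real measure"]
  by (simp add: measurable_lborel2)

lemma affine_meas: "(\<lambda>u. \<lambda>i\<in>I. b i + c * u i) \<in> measurable (PiM I (\<lambda>_. lborel)) (PiM I (\<lambda>_. lborel::real measure))"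
  apply (rule measurable_restrict)
  apply (subst measurable_cong_sets[OF refl sets_lborel])
  apply (intro borel_measurable_add borel_measurable_const borel_measurable_times comp_meas)
  apply simp
  done

lemma affine_meas2: "(\<lambda>u. \<lambda>i\<in>I. (u i - a i) / s) \<in> measurable (PiM I (\<lambda>_. lborel)) (PiM I (\<lambda>_. lborel::real measure))"
  apply (rule measurable_restrict)
  apply (subst measurable_cong_sets[OF refl sets_lborel])
  apply (intro borel_measurable_add borel_measurable_diff borel_measurable_divide borel_measurable_const borel_measurable_times comp_meas)
  apply simp
  done

lemma pre_borel: "A \<in> sets borel \<Longrightarrow> (\<lambda>x::real. b + c * x) -` A \<in> sets borel"
proof -
  assume A: "A \<in> sets borel"
  have "(\<lambda>x::real. b + c * x) \<in> borel_measurable borel"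
    by (intro borel_measurable_add borel_measurable_const borel_measurable_times measurable_ident_sets) auto
  from measurable_sets[OF this A] show ?thesis by simp
qed

lemma PiM_affine:
  fixes I :: "'i set" and b :: "'i \<Rightarrow> real" and c :: real
  assumes I: "finite I" and c: "c > 0"
  shows "PiM I (\<lambda>_. lborel::real measure) = scale_measure (ennreal (c ^ card I))
     (distr (PiM I (\<lambda>_. lborel)) (PiM I (\<lambda>_. lborel)) (\<lambda>u. \<lambda>i\<in>I. b i + c * u i))"
    (is "?M = ?Q")
proof -
  interpret product_sigma_finite "\<lambda>_. lborel" by standard
  have meas: "(\<lambda>u. \<lambda>i\<in>I. b i + c * u i) \<in> measurable ?M ?M"
    by (rule affine_meas)
  show ?thesis
  proof (rule PiM_eqI[symmetric, OF I])
    show "sets ?Q = sets ?M" by simp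
    fix A :: "'i \<Rightarrow> real set" assume A: "\<And>i. i \<in> I \<Longrightarrow> A i \<in> sets lborel"
    have PA: "Pi\<^sub>E I A \<in> sets ?M" using A by (simp add: sets_PiM_I_finite I)
    have pre: "(\<lambda>u. \<lambda>i\<in>I. b i + c * u i) -` Pi\<^sub>E I A \<inter> space ?M
        = Pi\<^sub>E I (\<lambda>i. (\<lambda>x. b i + c * x) -` A i)"
      by (auto simp: space_PiM PiE_iff extensional_def)
    have Ai: "emeasure lborel (A i) = ennreal c * emeasure lborel ((\<lambda>x. b i + c * x) -` A i)"
      if "i \<in> I" for i
    proof -
      have "emeasure lborel (A i) = emeasure (density (distr lborel borel (\<lambda>x. b i + c * x)) (\<lambda>_. ennreal \<bar>c\<bar>)) (A i)"
        using lborel_real_affine[of c "b i"] c by simp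
      also have "\<dots> = ennreal c * emeasure (distr lborel borel (\<lambda>x. b i + c * x)) (A i)"
        using A[OF that] c by (simp add: emeasure_density_const)
      also have "\<dots> = ennreal c * emeasure lborel ((\<lambda>x. b i + c * x) -` A i)"
        using A[OF that] by (simp add: emeasure_distr)
      finally show ?thesis .
    qed
    have "emeasure ?Q (Pi\<^sub>E I A) = ennreal (c ^ card I) *
          emeasure ?M (Pi\<^sub>E I (\<lambda>i. (\<lambda>x. b i + c * x) -` A i))"
      using PA meas by (simp add: emeasure_distr pre)
    also have "\<dots> = ennreal (c ^ card I) * (\<Prod>i\<in>I. emeasure lborel ((\<lambda>x. b i + c * x) -` A i))"
      using A by (subst emeasure_PiM[OF I]) (auto intro: pre_borel)
    also have "\<dots> = (\<Prod>i\<in>I. ennreal c * emeasure lborel ((\<lambda>x. b i + c * x) -` A i))"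
      using c by (simp add: prod.distrib ennreal_power)
    also have "\<dots> = (\<Prod>i\<in>I. emeasure lborel (A i))"
      using Ai by (simp cong: prod.cong)
    finally show "emeasure ?Q (Pi\<^sub>E I A) = (\<Prod>i\<in>I. emeasure lborel (A i))" .
  qed
qed

lemma PiM_affine_image:
  fixes I :: "'i set" and a :: "'i \<Rightarrow> real" and s :: real
  assumes I: "finite I" and s: "s > 0"
    and T: "T \<in> sets (PiM I (\<lambda>_. lborel))"
  shows "(\<lambda>u. \<lambda>i\<in>I. a i + s * u i) ` T \<in> sets (PiM I (\<lambda>_. lborel))"
    and "emeasure (PiM I (\<lambda>_. lborel)) ((\<lambda>u. \<lambda>i\<in>I. a i + s * u i) ` T)
       = ennreal (s ^ card I) * emeasure (PiM I (\<lambda>_. lborel)) T"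
proof -
  let ?M = "PiM I (\<lambda>_. lborel::real measure)"
  let ?L = "\<lambda>u. \<lambda>i\<in>I. a i + s * u i"
  let ?Li = "\<lambda>u. \<lambda>i\<in>I. (u i - a i) / s"
  have Tsp: "T \<subseteq> space ?M" using T sets.sets_into_space by blast
  have eq: "?L ` T = ?Li -` T \<inter> space ?M"
  proof
    show "?L ` T \<subseteq> ?Li -` T \<inter> space ?M"
    proof
      fix v assume "v \<in> ?L ` T"
      then obtain u where u: "u \<in> T" "v = ?L u" by blast
      have "?Li v = u" using u Tsp s by (auto simp: space_PiM PiE_iff extensional_def fun_eq_iff)
      then show "v \<in> ?Li -` T \<inter> space ?M" using u by (auto simp: space_PiM)
    qed
    show "?Li -` T \<inter> space ?M \<subseteq> ?L ` T"
    proof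
      fix v assume v: "v \<in> ?Li -` T \<inter> space ?M"
      have "v = ?L (?Li v)" using v s by (auto simp: space_PiM PiE_iff extensional_def fun_eq_iff)
      then show "v \<in> ?L ` T" using v by blast
    qed
  qed
  have mLi: "?Li \<in> measurable ?M ?M"
    by (rule affine_meas2)
  have mL: "?L \<in> measurable ?M ?M" by (rule affine_meas)
  show S: "?L ` T \<in> sets ?M" unfolding eq using mLi T by (rule measurable_sets)
  have pre: "?L -` (?L ` T) \<inter> space ?M = T"
  proof
    show "?L -` (?L ` T) \<inter> space ?M \<subseteq> T"
    proof
      fix u assume "u \<in> ?L -` (?L ` T) \<inter> space ?M"
      then obtain t where t: "t \<in> T" "?L u = ?L t" "u \<in> space ?M" by blast
      have "u i = t i" for i
      proof (cases "i \<in> I")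
        case True
        have "?L u i = ?L t i" using t(2) by simp
        then have "a i + s * u i = a i + s * t i" using True by simp
        then show ?thesis using s by simp
      next
        case False
        then show ?thesis using t Tsp by (auto simp: space_PiM PiE_iff extensional_def)
      qed
      then have "u = t" by (simp add: fun_eq_iff)
      then show "u \<in> T" using t by simp
    qed
    show "T \<subseteq> ?L -` (?L ` T) \<inter> space ?M" using Tsp by blast
  qed
  have "emeasure ?M (?L ` T) = emeasure (scale_measure (ennreal (s ^ card I)) (distr ?M ?M ?L)) (?L ` T)"
    by (subst PiM_affine[OF I s, of a, symmetric]) (rule refl)
  also have "\<dots> = ennreal (s ^ card I) * emeasure ?M T"
    using S mL by (simp add: emeasure_distr pre)
  finally show "emeasure ?M (?L ` T) = ennreal (s ^ card I) * emeasure ?M T" .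
qed

lemma onb_props:
  fixes V :: "'a::euclidean_space set"
  assumes V: "subspace V"
  shows "onb_of V \<subseteq> V" "pairwise orthogonal (onb_of V)" "\<And>b. b \<in> onb_of V \<Longrightarrow> norm b = 1"
    "span (onb_of V) = V" "finite (onb_of V)" "card (onb_of V) = dim V"
proof -
  let ?P = "\<lambda>B. B \<subseteq> V \<and> pairwise orthogonal B \<and> (\<forall>b\<in>B. norm b = 1) \<and> span B = V"
  obtain B where "B \<subseteq> V" "pairwise orthogonal B" "\<And>x. x \<in> B \<Longrightarrow> norm x = 1" "independent B" "card B = dim V" "span B = V"
    using orthonormal_basis_subspace[OF V] by blast
  then have "?P B" by blast
  then have P: "?P (onb_of V)" unfolding onb_of_def by (rule someI)
  then show "onb_of V \<subseteq> V" "pairwise orthogonal (onb_of V)" "\<And>b. b \<in> onb_of V \<Longrightarrow> norm b = 1"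
    "span (onb_of V) = V" by auto
  show "finite (onb_of V)" using P pairwise_orthogonal_imp_finite by blast
  have "0 \<notin> onb_of V" using P by force
  then have "independent (onb_of V)" using P pairwise_orthogonal_independent by blast
  then have "dim (span (onb_of V)) = card (onb_of V)" by (rule dim_span_eq_card_independent)
  then show "card (onb_of V) = dim V" using P by simp
qed

lemma onb_inner:
  assumes V: "subspace V" and b: "b \<in> onb_of V" and b': "b' \<in> onb_of V"
  shows "b \<bullet> b' = (if b = b' then 1 else 0)"
proof (cases "b = b'")
  case True
  then show ?thesis using onb_props(3)[OF V b] by (simp add: norm_eq_1)
next
  case False
  then show ?thesis using onb_props(2)[OF V] b b' by (auto simp: pairwise_def orthogonal_def)
qed

definition cc :: "'a::euclidean_space set \<Rightarrow> 'a \<Rightarrow> 'a \<Rightarrow> real" where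
  "cc V x = restrict (\<lambda>b. x \<bullet> b) (onb_of V)"

definition ee :: "'a::euclidean_space set \<Rightarrow> ('a \<Rightarrow> real) \<Rightarrow> 'a" where
  "ee V u = (\<Sum>b\<in>onb_of V. u b *\<^sub>R b)"

lemma flat_vol_cc: "flat_vol V A = measure (PiM (onb_of V) (\<lambda>_. lborel)) (cc V ` A)"
  unfolding flat_vol_def cc_def by simp

lemma ee_inner:
  assumes V: "subspace V" and b: "b \<in> onb_of V"
  shows "ee V u \<bullet> b = u b"
proof -
  have "ee V u \<bullet> b = (\<Sum>b'\<in>onb_of V. u b' * (b' \<bullet> b))"
    unfolding ee_def by (simp add: inner_sum_left)
  also have "\<dots> = (\<Sum>b'\<in>onb_of V. (if b' = b then u b else 0))"
    using onb_inner[OF V _ b] by (intro sum.cong) auto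
  also have "\<dots> = u b" using b onb_props(5)[OF V] by simp
  finally show ?thesis .
qed

lemma cc_ee:
  assumes V: "subspace V" and u: "u \<in> extensional (onb_of V)"
  shows "cc V (ee V u) = u"
  using u ee_inner[OF V] unfolding cc_def by (auto simp: fun_eq_iff extensional_def)

lemma ee_in: assumes V: "subspace V" shows "ee V u \<in> V"
proof -
  have "ee V u \<in> span (onb_of V)" unfolding ee_def
    by (intro span_sum span_mul span_base) 
  then show ?thesis using onb_props(4)[OF V] by simp
qed

lemma ee_cc:
  assumes V: "subspace V" and w: "w \<in> V"
  shows "ee V (cc V w) = w"
proof -
  have fin: "finite (onb_of V)" using onb_props(5)[OF V] .
  have "w \<in> span (onb_of V)" using w onb_props(4)[OF V] by simp
  then obtain r where r: "w = (\<Sum>b\<in>onb_of V. r b *\<^sub>R b)"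
    using span_finite[OF fin] by auto
  have "w \<bullet> b = r b" if "b \<in> onb_of V" for b
  proof -
    have "w \<bullet> b = (\<Sum>b'\<in>onb_of V. r b' * (b' \<bullet> b))" unfolding r by (simp add: inner_sum_left)
    also have "\<dots> = (\<Sum>b'\<in>onb_of V. (if b' = b then r b else 0))"
      using onb_inner[OF V _ that] by (intro sum.cong) auto
    also have "\<dots> = r b" using that fin by simp
    finally show ?thesis .
  qed
  then have "ee V (cc V w) = (\<Sum>b\<in>onb_of V. r b *\<^sub>R b)"
    unfolding ee_def cc_def by (intro sum.cong) auto
  then show ?thesis using r by simp
qed

lemma cc_affine: "cc V (z + s *\<^sub>R x) = (\<lambda>b\<in>onb_of V. cc V z b + s * cc V x b)"
  unfolding cc_def by (auto simp: fun_eq_iff inner_add_left)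

lemma cc_diff: "cc V (x - y) = (\<lambda>b\<in>onb_of V. cc V x b - cc V y b)"
  unfolding cc_def by (auto simp: fun_eq_iff inner_diff_left)

lemma cc_inj:
  assumes V: "subspace V" and d: "x - x' \<in> V" and e: "cc V x = cc V x'"
  shows "x = x'"
proof -
  have "cc V (x - x') = (\<lambda>b\<in>onb_of V. 0)" using e unfolding cc_diff by (auto simp: fun_eq_iff)
  then have "ee V (cc V (x - x')) = 0" unfolding ee_def by simp
  then show ?thesis using ee_cc[OF V d] by simp
qed

lemma cc_space: "cc V x \<in> space (PiM (onb_of V) (\<lambda>_. lborel::real measure))"
  unfolding cc_def by (simp add: space_PiM)

lemma norm_ee:
  assumes V: "subspace V"
  shows "norm (ee V u) \<le> (\<Sum>b\<in>onb_of V. \<bar>u b\<bar>)"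
proof -
  have "norm (ee V u) \<le> (\<Sum>b\<in>onb_of V. norm (u b *\<^sub>R b))" unfolding ee_def by (rule norm_sum)
  also have "\<dots> = (\<Sum>b\<in>onb_of V. \<bar>u b\<bar>)" using onb_props(3)[OF V] by (intro sum.cong) auto
  finally show ?thesis .
qed

lemma cc_image_eq:
  assumes V: "subspace V" and A: "A \<subseteq> (\<lambda>v. y + v) ` V"
  shows "cc V ` A = (\<lambda>u. y + ee V (\<lambda>b\<in>onb_of V. u b - y \<bullet> b)) -` A
           \<inter> space (PiM (onb_of V) (\<lambda>_. lborel::real measure))"
proof
  show "cc V ` A \<subseteq> (\<lambda>u. y + ee V (\<lambda>b\<in>onb_of V. u b - y \<bullet> b)) -` A
           \<inter> space (PiM (onb_of V) (\<lambda>_. lborel::real measure))"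
  proof
    fix u assume "u \<in> cc V ` A"
    then obtain x where x: "x \<in> A" "u = cc V x" by blast
    have xy: "x - y \<in> V" using x A by auto
    have "(\<lambda>b\<in>onb_of V. u b - y \<bullet> b) = cc V (x - y)"
      using x by (auto simp: cc_def fun_eq_iff inner_diff_left)
    then have "y + ee V (\<lambda>b\<in>onb_of V. u b - y \<bullet> b) = x" using ee_cc[OF V xy] by simp
    then show "u \<in> (\<lambda>u. y + ee V (\<lambda>b\<in>onb_of V. u b - y \<bullet> b)) -` A
           \<inter> space (PiM (onb_of V) (\<lambda>_. lborel::real measure))"
      using x cc_space by auto
  qed
  show "(\<lambda>u. y + ee V (\<lambda>b\<in>onb_of V. u b - y \<bullet> b)) -` A
           \<inter> space (PiM (onb_of V) (\<lambda>_. lborel::real measure)) \<subseteq> cc V ` A"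
  proof
    fix u assume u: "u \<in> (\<lambda>u. y + ee V (\<lambda>b\<in>onb_of V. u b - y \<bullet> b)) -` A
           \<inter> space (PiM (onb_of V) (\<lambda>_. lborel::real measure))"
    let ?x = "y + ee V (\<lambda>b\<in>onb_of V. u b - y \<bullet> b)"
    have "cc V ?x = u"
      using u ee_inner[OF V] by (auto simp: cc_def fun_eq_iff inner_add_left space_PiM PiE_iff extensional_def)
    moreover have "?x \<in> A" using u by simp
    ultimately show "u \<in> cc V ` A" by (rule image_eqI[OF sym])
  qed
qed

lemma cc_image_sets:
  assumes V: "subspace V" and A: "A \<subseteq> (\<lambda>v. y + v) ` V" and cl: "closed A"
  shows "cc V ` A \<in> sets (PiM (onb_of V) (\<lambda>_. lborel::real measure))"
proof -
  let ?M = "PiM (onb_of V) (\<lambda>_. lborel::real measure)"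
  have "(\<lambda>u. y + ee V (\<lambda>b\<in>onb_of V. u b - y \<bullet> b)) = (\<lambda>u. y + (\<Sum>b\<in>onb_of V. (u b - y \<bullet> b) *\<^sub>R b))"
    unfolding ee_def by (intro ext arg_cong2[where f="(+)"] refl sum.cong) auto
  moreover have "(\<lambda>u. y + (\<Sum>b\<in>onb_of V. (u b - y \<bullet> b) *\<^sub>R b)) \<in> borel_measurable ?M"
    by (intro borel_measurable_add borel_measurable_const borel_measurable_sum borel_measurable_scaleR
          borel_measurable_diff comp_meas)
  ultimately have m: "(\<lambda>u. y + ee V (\<lambda>b\<in>onb_of V. u b - y \<bullet> b)) \<in> borel_measurable ?M" by simp
  show ?thesis unfolding cc_image_eq[OF V A] using m borel_closed[OF cl] by (rule measurable_sets)
qed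

lemma fl_iff: "(x::'a::real_vector) \<in> (\<lambda>v. y + v) ` V \<longleftrightarrow> x - y \<in> V"
proof
  assume "x - y \<in> V" then show "x \<in> (\<lambda>v. y + v) ` V" by (rule rev_image_eqI) (simp add: algebra_simps)
qed auto

lemma flat_vol_affine:
  assumes V: "subspace V" and A: "A \<subseteq> (\<lambda>v. y + v) ` V" and cl: "closed A" and s: "s > 0"
  shows "flat_vol V ((\<lambda>x. z + s *\<^sub>R x) ` A) = s ^ dim V * flat_vol V A"
proof -
  let ?M = "PiM (onb_of V) (\<lambda>_. lborel::real measure)"
  let ?L = "\<lambda>u. \<lambda>b\<in>onb_of V. cc V z b + s * u b"
  have img: "cc V ` ((\<lambda>x. z + s *\<^sub>R x) ` A) = ?L ` (cc V ` A)"
    by (simp add: image_image cc_affine)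
  have T: "cc V ` A \<in> sets ?M" by (rule cc_image_sets[OF V A cl])
  have "emeasure ?M (?L ` (cc V ` A)) = ennreal (s ^ card (onb_of V)) * emeasure ?M (cc V ` A)"
    by (rule PiM_affine_image(2)[OF onb_props(5)[OF V] s T])
  then have "measure ?M (?L ` (cc V ` A)) = s ^ card (onb_of V) * measure ?M (cc V ` A)"
    using s by (simp add: measure_def enn2real_mult)
  then show ?thesis unfolding flat_vol_cc img onb_props(6)[OF V] .
qed

lemma cc_image_finite:
  assumes V: "subspace V" and A: "bounded A"
  shows "emeasure (PiM (onb_of V) (\<lambda>_. lborel::real measure)) (cc V ` A) < \<infinity>"
proof -
  interpret product_sigma_finite "\<lambda>_. lborel::real measure" by standard
  let ?M = "PiM (onb_of V) (\<lambda>_. lborel::real measure)"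
  obtain R where R: "\<And>x. x \<in> A \<Longrightarrow> norm x \<le> R" using A bounded_iff by blast
  have sub: "cc V ` A \<subseteq> Pi\<^sub>E (onb_of V) (\<lambda>_. {-R..R})"
  proof
    fix u assume "u \<in> cc V ` A"
    then obtain x where x: "x \<in> A" "u = cc V x" by blast
    have "\<bar>x \<bullet> b\<bar> \<le> R" if "b \<in> onb_of V" for b
    proof -
      have "\<bar>x \<bullet> b\<bar> \<le> norm x * norm b" by (rule Cauchy_Schwarz_ineq2)
      also have "\<dots> = norm x" using onb_props(3)[OF V that] by simp
      finally show ?thesis using R[OF x(1)] by simp
    qed
    then show "u \<in> Pi\<^sub>E (onb_of V) (\<lambda>_. {-R..R})" using x by (force simp: cc_def abs_le_iff)
  qed
  have "emeasure ?M (cc V ` A) \<le> emeasure ?M (Pi\<^sub>E (onb_of V) (\<lambda>_. {-R..R}))"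
    by (rule emeasure_mono[OF sub]) (simp add: sets_PiM_I_finite onb_props(5)[OF V])
  also have "\<dots> = (\<Prod>b\<in>onb_of V. emeasure lborel {-R..R})"
    by (rule emeasure_PiM[OF onb_props(5)[OF V]]) simp
  also have "\<dots> < \<infinity>" by (simp add: power_less_top_ennreal emeasure_lborel_Icc_eq)
  finally show ?thesis .
qed

lemma flat_vol_pos:
  assumes V: "subspace V" and r: "r > 0" and A: "A \<subseteq> (\<lambda>v. x + v) ` V" "closed A" "bounded A"
    and ball: "ball x r \<inter> (\<lambda>v. x + v) ` V \<subseteq> A"
  shows "flat_vol V A > 0"
proof -
  interpret product_sigma_finite "\<lambda>_. lborel::real measure" by standard
  let ?M = "PiM (onb_of V) (\<lambda>_. lborel::real measure)"
  let ?B = "onb_of V"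
  define d where "d = card ?B"
  define \<delta> where "\<delta> = r / (real d + 1)"
  have \<delta>: "\<delta> > 0" using r by (simp add: \<delta>_def)
  have d\<delta>: "real d * \<delta> < r" using r by (simp add: \<delta>_def field_simps)
  let ?X = "Pi\<^sub>E ?B (\<lambda>b. {x \<bullet> b - \<delta> <..< x \<bullet> b + \<delta>})"
  have sub: "?X \<subseteq> cc V ` A"
  proof
    fix u assume u: "u \<in> ?X"
    let ?w = "\<lambda>b\<in>?B. u b - x \<bullet> b"
    let ?x = "x + ee V ?w"
    have "norm (ee V ?w) \<le> (\<Sum>b\<in>?B. \<bar>?w b\<bar>)" by (rule norm_ee[OF V])
    also have "\<dots> \<le> (\<Sum>b\<in>?B. \<delta>)"
      using u by (intro sum_mono) (auto simp: PiE_iff abs_le_iff)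
    also have "\<dots> = real d * \<delta>" by (simp add: d_def)
    finally have "norm (ee V ?w) < r" using d\<delta> by simp
    then have "?x \<in> ball x r" by (simp add: dist_norm)
    moreover have "?x \<in> (\<lambda>v. x + v) ` V" using ee_in[OF V] by simp
    ultimately have xA: "?x \<in> A" using ball by blast
    have "cc V ?x = u"
      using u ee_inner[OF V] by (auto simp: cc_def fun_eq_iff inner_add_left PiE_iff extensional_def)
    then show "u \<in> cc V ` A" using xA by (rule image_eqI[OF sym])
  qed
  have "0 < (\<Prod>b\<in>?B. emeasure lborel {x \<bullet> b - \<delta> <..< x \<bullet> b + \<delta>})"
  proof -
    have "0 < ennreal ((2 * \<delta>) ^ card ?B)" using \<delta> by simp
    then show ?thesis using \<delta> by (simp add: ennreal_power)
  qed
  also have "(\<Prod>b\<in>?B. emeasure lborel {x \<bullet> b - \<delta> <..< x \<bullet> b + \<delta>}) = emeasure ?M ?X"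
    by (rule emeasure_PiM[OF onb_props(5)[OF V], symmetric]) simp
  also have "\<dots> \<le> emeasure ?M (cc V ` A)"
    by (rule emeasure_mono[OF sub cc_image_sets[OF V A(1,2)]])
  finally have pos: "0 < emeasure ?M (cc V ` A)" .
  have fin: "emeasure ?M (cc V ` A) < \<infinity>" by (rule cc_image_finite[OF V A(3)])
  show ?thesis unfolding flat_vol_cc measure_def using pos fin
    by (simp add: enn2real_positive_iff)
qed

lemma flat_vol_eq:
  fixes A C V :: "'a::euclidean_space set"
  assumes V: "subspace V" and AC: "A \<subseteq> C" and cA: "compact A" and cC: "compact C"
    and cvx: "convex C" and Cfl: "C \<subseteq> (\<lambda>v. y + v) ` V"
    and eq: "flat_vol V A = flat_vol V C" and pos: "flat_vol V C > 0"
  shows "A = C"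
proof (rule ccontr)
  let ?M = "PiM (onb_of V) (\<lambda>_. lborel::real measure)"
  assume "A \<noteq> C"
  then obtain b where b: "b \<in> C" "b \<notin> A" using AC by blast
  have "open (- A)" using compact_imp_closed[OF cA] by (simp add: open_Compl)
  then obtain \<delta> where \<delta>: "\<delta> > 0" "ball b \<delta> \<subseteq> - A" using b(2) open_contains_ball by blast
  obtain R where R: "R > 0" "\<And>x. x \<in> C \<Longrightarrow> norm x \<le> R"
    using compact_imp_bounded[OF cC] bounded_pos by blast
  define \<epsilon> where "\<epsilon> = min (1/2) (\<delta> / (4 * R))"
  have \<epsilon>: "0 < \<epsilon>" "\<epsilon> < 1" "\<epsilon> * (2 * R) < \<delta>"
    using \<delta> R by (auto simp: \<epsilon>_def min_def field_simps)
  define D where "D = (\<lambda>x. (1 - \<epsilon>) *\<^sub>R b + \<epsilon> *\<^sub>R x) ` C"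
  have DC: "D \<subseteq> C"
  proof
    fix d assume "d \<in> D"
    then obtain x where x: "x \<in> C" "d = (1 - \<epsilon>) *\<^sub>R b + \<epsilon> *\<^sub>R x" unfolding D_def by blast
    show "d \<in> C" unfolding x(2) using convexD[OF cvx b(1) x(1), of "1 - \<epsilon>" \<epsilon>] \<epsilon> by simp
  qed
  have DA: "D \<inter> A = {}"
  proof -
    have "d \<in> ball b \<delta>" if "d \<in> D" for d
    proof -
      obtain x where x: "x \<in> C" "d = (1 - \<epsilon>) *\<^sub>R b + \<epsilon> *\<^sub>R x" using \<open>d \<in> D\<close> unfolding D_def by blast
      have "d - b = \<epsilon> *\<^sub>R (x - b)" unfolding x(2) by (simp add: algebra_simps)
      then have "norm (d - b) = \<epsilon> * norm (x - b)" using \<epsilon> by simp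
      also have "\<dots> \<le> \<epsilon> * (2 * R)"
      proof -
        have "norm (x - b) \<le> norm x + norm b" by (rule norm_triangle_ineq4)
        also have "\<dots> \<le> 2 * R" using R(2)[OF x(1)] R(2)[OF b(1)] by simp
        finally show ?thesis using \<epsilon> by simp
      qed
      finally show ?thesis using \<epsilon> by (simp add: dist_norm norm_minus_commute)
    qed
    then show ?thesis using \<delta>(2) by blast
  qed
  have cD: "compact D" unfolding D_def
    by (rule compact_continuous_image[OF _ cC]) (intro continuous_intros)
  have Afl: "A \<subseteq> (\<lambda>v. y + v) ` V" using AC Cfl by blast
  have Dfl: "D \<subseteq> (\<lambda>v. y + v) ` V" using DC Cfl by blast
  have volD: "flat_vol V D = \<epsilon> ^ dim V * flat_vol V C"
    unfolding D_def by (rule flat_vol_affine[OF V Cfl compact_imp_closed[OF cC] \<epsilon>(1)])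
  have disj: "cc V ` A \<inter> cc V ` D = {}"
  proof (rule ccontr)
    assume "cc V ` A \<inter> cc V ` D \<noteq> {}"
    then obtain a d where ad: "a \<in> A" "d \<in> D" "cc V a = cc V d" by blast
    have "a - y \<in> V" "d - y \<in> V" using ad Afl Dfl fl_iff by blast+
    then have "a - d \<in> V" using subspace_diff[OF V] by fastforce
    then have "a = d" using cc_inj[OF V _ ad(3)] by simp
    then show False using ad DA by blast
  qed
  have sA: "cc V ` A \<in> sets ?M" by (rule cc_image_sets[OF V Afl compact_imp_closed[OF cA]])
  have sD: "cc V ` D \<in> sets ?M" by (rule cc_image_sets[OF V Dfl compact_imp_closed[OF cD]])
  have sC: "cc V ` C \<in> sets ?M" by (rule cc_image_sets[OF V Cfl compact_imp_closed[OF cC]])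
  have fA: "emeasure ?M (cc V ` A) \<noteq> \<infinity>" using cc_image_finite[OF V compact_imp_bounded[OF cA]] by simp
  have fD: "emeasure ?M (cc V ` D) \<noteq> \<infinity>" using cc_image_finite[OF V compact_imp_bounded[OF cD]] by simp
  have fC: "cc V ` C \<in> fmeasurable ?M"
    using cc_image_finite[OF V compact_imp_bounded[OF cC]] sC by (intro fmeasurableI) auto
  have "measure ?M (cc V ` A \<union> cc V ` D) = flat_vol V A + flat_vol V D"
    unfolding flat_vol_cc by (rule measure_Union[OF fA fD sA sD disj])
  moreover have "measure ?M (cc V ` A \<union> cc V ` D) \<le> flat_vol V C"
    unfolding flat_vol_cc
    by (rule measure_mono_fmeasurable) (use AC DC sA sD fC in auto)
  moreover have "\<epsilon> ^ dim V * flat_vol V C > 0" using \<epsilon> pos by simp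
  ultimately show False using eq volD by simp
qed

lemma proj_props:
  fixes H :: "'a::euclidean_space set"
  assumes H: "subspace H"
  shows "proj_onto H x \<in> H" "x - proj_onto H x \<in> orthogonal_comp H"
proof -
  have "x \<in> H + orthogonal_comp H" using subspace_sum_orthogonal_comp[OF H] by simp
  then obtain a b where ab: "a \<in> H" "b \<in> orthogonal_comp H" "x = a + b" by (meson set_plus_elim)
  then have "\<exists>h. h \<in> H \<and> x - h \<in> orthogonal_comp H" by (intro exI[of _ a]) simp
  then have "proj_onto H x \<in> H \<and> x - proj_onto H x \<in> orthogonal_comp H"
    unfolding proj_onto_def by (rule someI_ex)
  then show "proj_onto H x \<in> H" "x - proj_onto H x \<in> orthogonal_comp H" by auto
qed

lemma proj_char:
  fixes H :: "'a::euclidean_space set"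
  assumes H: "subspace H" and h: "h \<in> H" "x - h \<in> orthogonal_comp H"
  shows "proj_onto H x = h"
proof -
  have "proj_onto H x - h \<in> H" using proj_props(1)[OF H] h(1) subspace_diff[OF H] by blast
  moreover have "proj_onto H x - h = (x - h) - (x - proj_onto H x)" by simp
  then have "proj_onto H x - h \<in> orthogonal_comp H"
    using h(2) proj_props(2)[OF H] subspace_diff[OF subspace_orthogonal_comp] by metis
  ultimately have "proj_onto H x - h = 0" using orthogonal_Int_0[OF H] by blast
  then show ?thesis by simp
qed

lemma proj_lin:
  fixes H :: "'a::euclidean_space set"
  assumes H: "subspace H"
  shows "proj_onto H (a *\<^sub>R x + b *\<^sub>R x') = a *\<^sub>R proj_onto H x + b *\<^sub>R proj_onto H x'"
proof (rule proj_char[OF H])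
  show "a *\<^sub>R proj_onto H x + b *\<^sub>R proj_onto H x' \<in> H"
    using proj_props(1)[OF H] H by (simp add: subspace_add subspace_scale)
  have "a *\<^sub>R x + b *\<^sub>R x' - (a *\<^sub>R proj_onto H x + b *\<^sub>R proj_onto H x')
      = a *\<^sub>R (x - proj_onto H x) + b *\<^sub>R (x' - proj_onto H x')" by (simp add: algebra_simps)
  then show "a *\<^sub>R x + b *\<^sub>R x' - (a *\<^sub>R proj_onto H x + b *\<^sub>R proj_onto H x') \<in> orthogonal_comp H"
    using proj_props(2)[OF H, of x] proj_props(2)[OF H, of x'] subspace_orthogonal_comp[of H]
    by (simp add: subspace_add subspace_scale)
qed

lemma fl_proj:
  fixes H :: "'a::euclidean_space set"
  assumes H: "subspace H" and y: "y \<in> H"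
  shows "x \<in> (\<lambda>v. y + v) ` orthogonal_comp H \<longleftrightarrow> proj_onto H x = y"
  using proj_char[OF H y] proj_props[OF H] fl_iff by metis

lemma dim_orth:
  fixes H :: "'a::euclidean_space set"
  assumes H: "subspace H"
  shows "dim (orthogonal_comp H) = DIM('a) - dim H"
proof -
  have "dim (H \<union> orthogonal_comp H) = dim H + dim (orthogonal_comp H)"
    by (rule dim_orthogonal_sum) (auto simp: orthogonal_comp_def orthogonal_def)
  moreover have "span (H \<union> orthogonal_comp H) = UNIV"
  proof -
    have "x \<in> span (H \<union> orthogonal_comp H)" for x
    proof -
      have "x = proj_onto H x + (x - proj_onto H x)" by simp
      moreover have "proj_onto H x \<in> span (H \<union> orthogonal_comp H)"
        using proj_props(1)[OF H] by (simp add: span_base)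
      moreover have "x - proj_onto H x \<in> span (H \<union> orthogonal_comp H)"
        using proj_props(2)[OF H] by (simp add: span_base)
      ultimately show ?thesis by (metis span_add)
    qed
    then show ?thesis by auto
  qed
  then have "dim (H \<union> orthogonal_comp H) = DIM('a)" by (metis dim_span dim_UNIV)
  ultimately show ?thesis by simp
qed

lemma powr_pow_inv:
  assumes "v \<ge> 0" "d > 0"
  shows "(v powr (1 / real d)) ^ d = (v::real)"
proof (cases "v = 0")
  case True then show ?thesis using assms by simp
next
  case False
  then have "v > 0" using assms by simp
  then have "(v powr (1 / real d)) ^ d = (v powr (1 / real d)) powr real d"
    by (simp add: powr_realpow)
  also have "\<dots> = v" using assms by (simp add: powr_powr)
  finally show ?thesis .
qed

theorem lemma3p1:
  fixes K H :: "'a::euclidean_space set" and i :: nat and y0 :: 'a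
    and f :: "'a \<Rightarrow> real"
  assumes K: "compact K" "convex K" "interior K \<noteq> {}"
    and H: "subspace H" "dim H = i" "1 \<le> i" "i \<le> DIM('a) - 1"
    and f_def: "\<And>y. f y = flat_vol (orthogonal_comp H)
                   (K \<inter> (\<lambda>v. y + v) ` orthogonal_comp H) powr (1 / real (DIM('a) - i))"
    and y0: "y0 \<in> proj_onto H ` K"
    and cone: "{(y, t). y \<in> proj_onto H ` K \<and> 0 \<le> t \<and> t \<le> f y}
             = convex hull ((proj_onto H ` K \<times> {0}) \<union> {(y0, Sup (f ` proj_onto H ` K))})"
  shows "\<forall>y \<in> proj_onto H ` K. \<exists>z.
           K \<inter> (\<lambda>v. y + v) ` orthogonal_comp H
         = (\<lambda>x. z + (1 - mink_at (proj_onto H ` K) y0 y) *\<^sub>R x) `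
             (K \<inter> (\<lambda>v. y0 + v) ` orthogonal_comp H)"
proof -
  define V where "V = orthogonal_comp H"
  define P where "P = proj_onto H ` K"
  define S where "S y = K \<inter> (\<lambda>v. y + v) ` V" for y
  define M where "M = Sup (f ` P)"
  define d where "d = DIM('a) - i"
  define g where "g y = mink_at P y0 y" for y
  have V: "subspace V" unfolding V_def by (rule subspace_orthogonal_comp)
  have dV: "dim V = d" using dim_orth[OF H(1)] H(2) unfolding d_def V_def by simp
  have d: "d > 0" using H(3,4) DIM_positive[where 'a='a] unfolding d_def by linarith
  have fS: "f y = flat_vol V (S y) powr (1 / real d)" for y
    using f_def unfolding S_def V_def d_def by simp
  have vol0: "flat_vol V A \<ge> 0" for A unfolding flat_vol_def by simp
  have fpow: "f y ^ d = flat_vol V (S y)" for y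
    unfolding fS using powr_pow_inv[OF vol0 d] .
  have f0: "f y \<ge> 0" for y unfolding fS by simp
  have PH: "P \<subseteq> H" unfolding P_def using proj_props(1)[OF H(1)] by blast
  have Pc: "convex P"
    unfolding convex_def
  proof (intro ballI allI impI)
    fix p1 p2 and u v :: real assume p: "p1 \<in> P" "p2 \<in> P" and uv: "0 \<le> u" "0 \<le> v" "u + v = 1"
    obtain k1 k2 where k: "k1 \<in> K" "k2 \<in> K" "p1 = proj_onto H k1" "p2 = proj_onto H k2"
      using p unfolding P_def by blast
    have "u *\<^sub>R k1 + v *\<^sub>R k2 \<in> K" using convexD[OF K(2) k(1,2) uv] .
    moreover have "u *\<^sub>R p1 + v *\<^sub>R p2 = proj_onto H (u *\<^sub>R k1 + v *\<^sub>R k2)"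
      using proj_lin[OF H(1)] k by simp
    ultimately show "u *\<^sub>R p1 + v *\<^sub>R p2 \<in> P" unfolding P_def by blast
  qed
  have Pne: "P \<noteq> {}" using y0 unfolding P_def by blast
  have y0P: "y0 \<in> P" using y0 unfolding P_def .
  have Sfl: "S y \<subseteq> (\<lambda>v. y + v) ` V" for y unfolding S_def by blast
  have flcl: "closed ((\<lambda>v. y + v) ` V)" for y
    using closed_translation[OF closed_subspace[OF V], of y] by simp
  have Scomp: "compact (S y)" for y
    unfolding S_def using compact_Int_closed[OF K(1) flcl] .
  have Sconv: "convex (S y)" for y
    unfolding S_def using convex_Int[OF K(2) convex_translation[OF subspace_imp_convex[OF V], of y]] by simp
  have Smem: "x \<in> S y \<longleftrightarrow> x \<in> K \<and> proj_onto H x = y" if "y \<in> H" for x y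
    unfolding S_def V_def using fl_proj[OF H(1) that] by blast
  have Sne: "S y \<noteq> {}" if yP: "y \<in> P" for y
  proof -
    obtain k where "k \<in> K" "y = proj_onto H k" using yP unfolding P_def by blast
    then have "k \<in> S y" using Smem PH yP by blast
    then show ?thesis by blast
  qed
  have hullc: "convex hull (insert (y0, M) (P \<times> {0}))
      = {(1 - u) *\<^sub>R (y0, M) + u *\<^sub>R x |x u. 0 \<le> u \<and> u \<le> 1 \<and> x \<in> P \<times> {0}}"
  proof -
    have "convex hull (P \<times> {0::real}) = P \<times> {0}"
      using convex_Times[OF Pc convex_singleton] by (simp add: convex_hull_eq)
    then show ?thesis using Pne by (simp add: convex_hull_insert_alt)
  qed
  have cone': "{(y, t). y \<in> P \<and> 0 \<le> t \<and> t \<le> f y} = convex hull (insert (y0, M) (P \<times> {0}))"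
    using cone unfolding P_def M_def by simp
  have hyp_intro: "(1 - u) *\<^sub>R y0 + u *\<^sub>R p \<in> P \<and> 0 \<le> (1 - u) * M \<and> (1 - u) * M \<le> f ((1 - u) *\<^sub>R y0 + u *\<^sub>R p)"
    if "p \<in> P" "0 \<le> u" "u \<le> 1" for p u
  proof -
    have "((1 - u) *\<^sub>R y0 + u *\<^sub>R p, (1 - u) * M) = (1 - u) *\<^sub>R (y0, M) + u *\<^sub>R (p, 0)" by simp
    moreover have "(p, 0) \<in> P \<times> {0}" using that by simp
    ultimately have "((1 - u) *\<^sub>R y0 + u *\<^sub>R p, (1 - u) * M) \<in> convex hull (insert (y0, M) (P \<times> {0}))"
      unfolding hullc using that by blast
    then show ?thesis unfolding cone'[symmetric] by simp
  qed
  have hyp_elim: "\<exists>p u. p \<in> P \<and> 0 \<le> u \<and> u \<le> 1 \<and> y = (1 - u) *\<^sub>R y0 + u *\<^sub>R p \<and> f y = (1 - u) * M"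
    if "y \<in> P" for y
  proof -
    have "(y, f y) \<in> convex hull (insert (y0, M) (P \<times> {0}))"
      unfolding cone'[symmetric] using that f0 by simp
    then obtain x u where xu: "0 \<le> u" "u \<le> 1" "x \<in> P \<times> {0}" "(y, f y) = (1 - u) *\<^sub>R (y0, M) + u *\<^sub>R x"
      unfolding hullc by blast
    then obtain p where p: "p \<in> P" "x = (p, 0)" by blast
    have e: "(y, f y) = (1 - u) *\<^sub>R (y0, M) + u *\<^sub>R (p, 0)" using xu(4) unfolding p(2) .
    have "(1 - u) *\<^sub>R (y0, M) + u *\<^sub>R (p, 0::real) = ((1 - u) *\<^sub>R y0 + u *\<^sub>R p, (1 - u) * M)" by simp
    with e have "(y, f y) = ((1 - u) *\<^sub>R y0 + u *\<^sub>R p, (1 - u) * M)" by (rule trans)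
    then have "y = (1 - u) *\<^sub>R y0 + u *\<^sub>R p \<and> f y = (1 - u) * M" by (rule iffD1[OF prod.inject])
    then show ?thesis using xu p by blast
  qed
  have M0: "0 \<le> M" using hyp_intro[OF y0P, of 0] by simp
  have fle: "f y \<le> M" if yP: "y \<in> P" for y
  proof -
    obtain p u where "p \<in> P" "0 \<le> u" "u \<le> 1" "f y = (1 - u) * M" using hyp_elim[OF yP] by blast
    then show ?thesis using M0 by (simp add: mult_left_le_one_le)
  qed
  have Mpos: "M > 0"
  proof -
    obtain x where x: "x \<in> interior K" using K(3) by blast
    then obtain r where r: "r > 0" "ball x r \<subseteq> K" using mem_interior by blast
    define y where "y = proj_onto H x"
    have yP: "y \<in> P" unfolding y_def P_def using x interior_subset by blast
    have xy: "x - y \<in> V" unfolding y_def V_def using proj_props(2)[OF H(1)] .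
    have sub1: "S y \<subseteq> (\<lambda>v. x + v) ` V"
    proof
      fix x' assume "x' \<in> S y"
      then have "x' \<in> (\<lambda>v. y + v) ` V" using Sfl by blast
      then have "x' - y \<in> V" using fl_iff[of x' y V] by blast
      then have "(x' - y) - (x - y) \<in> V" using xy subspace_diff[OF V] by blast
      then show "x' \<in> (\<lambda>v. x + v) ` V" using fl_iff[of x' x V] by simp
    qed
    have sub2: "ball x r \<inter> (\<lambda>v. x + v) ` V \<subseteq> S y"
    proof
      fix x' assume x': "x' \<in> ball x r \<inter> (\<lambda>v. x + v) ` V"
      then have "x' - x \<in> V" using fl_iff[of x' x V] by blast
      then have "(x' - x) + (x - y) \<in> V" using xy subspace_add[OF V] by blast
      then have "x' \<in> (\<lambda>v. y + v) ` V" using fl_iff[of x' y V] by simp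
      then show "x' \<in> S y" using x' r(2) unfolding S_def by blast
    qed
    have "flat_vol V (S y) > 0"
      by (rule flat_vol_pos[OF V r(1) sub1 compact_imp_closed[OF Scomp] compact_imp_bounded[OF Scomp] sub2])
    then have "f y > 0" unfolding fS by simp
    then show ?thesis using fle[OF yP] by simp
  qed
  have gchar: "\<exists>p. p \<in> P \<and> 0 \<le> g y \<and> g y \<le> 1 \<and> y = y0 + g y *\<^sub>R (p - y0) \<and> f y = (1 - g y) * M
      \<and> (\<forall>x l. x \<in> P \<longrightarrow> 0 \<le> l \<longrightarrow> y = y0 + l *\<^sub>R (x - y0) \<longrightarrow> g y \<le> l)"
    if yP: "y \<in> P" for y
  proof -
    obtain p u where pu: "p \<in> P" "0 \<le> u" "u \<le> 1" "y = (1 - u) *\<^sub>R y0 + u *\<^sub>R p" "f y = (1 - u) * M"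
      using hyp_elim[OF yP] by blast
    have yu: "y = y0 + u *\<^sub>R (p - y0)" using pu(4) by (simp add: algebra_simps)
    have minl: "u \<le> l" if "x \<in> P" "0 \<le> l" "y = y0 + l *\<^sub>R (x - y0)" for x l
    proof (cases "l \<le> 1")
      case True
      have "(1 - l) * M \<le> f ((1 - l) *\<^sub>R y0 + l *\<^sub>R x)" using hyp_intro[OF that(1,2) True] by blast
      also have "(1 - l) *\<^sub>R y0 + l *\<^sub>R x = y" using that(3) by (simp add: algebra_simps)
      finally have "(1 - l) * M \<le> (1 - u) * M" using pu(5) by simp
      then show ?thesis using Mpos by simp
    next
      case False then show ?thesis using pu(3) by simp
    qed
    have "g y = u"
      unfolding g_def mink_at_def
    proof (rule cInf_eq_minimum)
      show "u \<in> {l. 0 \<le> l \<and> y \<in> (\<lambda>x. y0 + l *\<^sub>R (x - y0)) ` P}" using pu(1,2) yu by blast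
      show "u \<le> l" if "l \<in> {l. 0 \<le> l \<and> y \<in> (\<lambda>x. y0 + l *\<^sub>R (x - y0)) ` P}" for l
        using that minl by blast
    qed
    then show ?thesis using pu yu minl by (intro exI[of _ p]) auto
  qed
  have g0: "g y0 = 0"
  proof -
    obtain p :: 'a where "0 \<le> g y0" "\<forall>x l. x \<in> P \<longrightarrow> 0 \<le> l \<longrightarrow> y0 = y0 + l *\<^sub>R (x - y0) \<longrightarrow> g y0 \<le> l"
      using gchar[OF y0P] by blast
    then show ?thesis using y0P by force
  qed
  have fy0: "f y0 = M" using gchar[OF y0P] g0 by auto
  have main: "S y = (\<lambda>x. t *\<^sub>R k + (1 - t) *\<^sub>R x) ` S y0"
    if yP: "y \<in> P" and pP: "p \<in> P" and t: "0 < t" "t < 1" and ypt: "y = y0 + t *\<^sub>R (p - y0)"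
      and k: "k \<in> S p" and gy: "g y = t" for y p t k
  proof -
    let ?T = "(\<lambda>x. t *\<^sub>R k + (1 - t) *\<^sub>R x) ` S y0"
    have kK: "k \<in> K" "proj_onto H k = p" using k Smem PH pP by blast+
    have TS: "?T \<subseteq> S y"
    proof
      fix q assume "q \<in> ?T"
      then obtain x where x: "x \<in> S y0" "q = t *\<^sub>R k + (1 - t) *\<^sub>R x" by blast
      have xK: "x \<in> K" "proj_onto H x = y0" using x(1) Smem PH y0P by blast+
      have "q \<in> K" unfolding x(2) using convexD[OF K(2) kK(1) xK(1), of t "1 - t"] t by simp
      moreover have "proj_onto H q = y"
        unfolding x(2) proj_lin[OF H(1)] kK(2) xK(2) ypt by (simp add: algebra_simps)
      ultimately show "q \<in> S y" using Smem PH yP by blast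
    qed
    have volT: "flat_vol V ?T = (1 - t) ^ d * flat_vol V (S y0)"
      using flat_vol_affine[OF V Sfl[of y0] compact_imp_closed[OF Scomp[of y0]], where s="1 - t" and z="t *\<^sub>R k"] t dV by simp
    have "flat_vol V (S y0) = M ^ d" using fpow[of y0] fy0 by simp
    then have volT': "flat_vol V ?T = ((1 - t) * M) ^ d" using volT by (simp add: power_mult_distrib)
    have volS: "flat_vol V (S y) = ((1 - t) * M) ^ d"
      using fpow[of y] gchar[OF yP] gy by auto
    have posS: "flat_vol V (S y) > 0" using volS t Mpos by simp
    have cT: "compact ?T"
      by (rule compact_continuous_image[OF _ Scomp]) (intro continuous_intros)
    show ?thesis
      by (rule flat_vol_eq[OF V TS cT Scomp Sconv Sfl, symmetric]) (use volT' volS posS in simp_all)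
  qed
  have pt: "k1 = k2" if pP: "p \<in> P" and gp: "g p = 1" and k: "k1 \<in> S p" "k2 \<in> S p" for p k1 k2
  proof -
    define y' where "y' = y0 + (1/2) *\<^sub>R (p - y0)"
    have y'P: "y' \<in> P"
    proof -
      have "(1/2) *\<^sub>R y0 + (1/2) *\<^sub>R p \<in> P" using convexD[OF Pc y0P pP, of "1/2" "1/2"] by simp
      moreover have "(1/2) *\<^sub>R y0 + (1/2) *\<^sub>R p = y'" unfolding y'_def by (simp add: algebra_simps flip: scaleR_add_left)
      ultimately show ?thesis by simp
    qed
    obtain q where q: "q \<in> P" "y' = y0 + g y' *\<^sub>R (q - y0)" "0 \<le> g y'"
      and minq: "\<forall>x l. x \<in> P \<longrightarrow> 0 \<le> l \<longrightarrow> y' = y0 + l *\<^sub>R (x - y0) \<longrightarrow> g y' \<le> l"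
      using gchar[OF y'P] by blast
    have le: "g y' \<le> 1/2" using minq[rule_format, OF pP, of "1/2"] y'_def by simp
    have "p = y0 + (2 * g y') *\<^sub>R (q - y0)"
    proof -
      have "p - y0 = 2 *\<^sub>R (y' - y0)" unfolding y'_def by simp
      also have "\<dots> = (2 * g y') *\<^sub>R (q - y0)"
      proof -
        have "y' - y0 = g y' *\<^sub>R (q - y0)" using q(2) by (metis add_diff_cancel_left')
        then show ?thesis by simp
      qed
      finally show ?thesis by (simp add: algebra_simps)
    qed
    then have "g p \<le> 2 * g y'" using gchar[OF pP] q(1,3) by auto
    then have gy': "g y' = 1/2" using gp le by simp
    have e1: "S y' = (\<lambda>x. (1/2) *\<^sub>R k1 + (1 - 1/2) *\<^sub>R x) ` S y0"
      by (rule main[OF y'P pP _ _ _ k(1) gy']) (simp_all add: y'_def)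
    have e2: "S y' = (\<lambda>x. (1/2) *\<^sub>R k2 + (1 - 1/2) *\<^sub>R x) ` S y0"
      by (rule main[OF y'P pP _ _ _ k(2) gy']) (simp_all add: y'_def)
    define v where "v = k1 - k2"
    have step: "x + v \<in> S y0" if "x \<in> S y0" for x
    proof -
      have "(1/2) *\<^sub>R k1 + (1 - 1/2) *\<^sub>R x \<in> S y'" unfolding e1 using that by blast
      then obtain x' where x': "x' \<in> S y0" "(1/2) *\<^sub>R k1 + (1 - 1/2) *\<^sub>R x = (1/2) *\<^sub>R k2 + (1 - 1/2) *\<^sub>R x'"
        unfolding e2 by blast
      then have "(2::real) *\<^sub>R ((1/2) *\<^sub>R k1 + (1 - 1/2) *\<^sub>R x) = 2 *\<^sub>R ((1/2) *\<^sub>R k2 + (1 - 1/2) *\<^sub>R x')"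
        by simp
      then have "k1 + x = k2 + x'" by (simp add: scaleR_add_right)
      then have "x' = x + v" unfolding v_def by (simp add: algebra_simps)
      then show ?thesis using x'(1) by simp
    qed
    obtain x0 where x0: "x0 \<in> S y0" using Sne[OF y0P] by blast
    have iter: "x0 + real n *\<^sub>R v \<in> S y0" for n
    proof (induction n)
      case 0 then show ?case using x0 by simp
    next
      case (Suc n)
      have eq: "x0 + real (Suc n) *\<^sub>R v = (x0 + real n *\<^sub>R v) + v" by (simp add: algebra_simps)
      show ?case unfolding eq by (rule step[OF Suc])
    qed
    obtain R where R: "\<And>x. x \<in> S y0 \<Longrightarrow> norm x \<le> R"
      using compact_imp_bounded[OF Scomp] bounded_iff by blast
    show ?thesis
    proof (rule ccontr)
      assume "k1 \<noteq> k2"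
      then have nv: "norm v > 0" unfolding v_def by simp
      obtain n :: nat where n: "2 * R / norm v < real n" using reals_Archimedean2 by blast
      have "real n * norm v = norm ((x0 + real n *\<^sub>R v) - x0)" by simp
      also have "\<dots> \<le> norm (x0 + real n *\<^sub>R v) + norm x0" by (rule norm_triangle_ineq4)
      also have "\<dots> \<le> 2 * R" using R[OF iter[of n]] R[OF x0] by simp
      finally have "real n \<le> 2 * R / norm v" using nv by (simp add: field_simps)
      then show False using n by simp
    qed
  qed
  have final: "\<forall>y\<in>P. \<exists>z. S y = (\<lambda>x. z + (1 - g y) *\<^sub>R x) ` S y0"
  proof
    fix y assume yP: "y \<in> P"
    obtain p where p: "p \<in> P" "0 \<le> g y" "g y \<le> 1" "y = y0 + g y *\<^sub>R (p - y0)"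
      using gchar[OF yP] by blast
    obtain k where k: "k \<in> K" "p = proj_onto H k" using p(1) unfolding P_def by blast
    have kS: "k \<in> S p" using Smem PH p(1) k by blast
    consider "g y = 0" | "0 < g y \<and> g y < 1" | "g y = 1" using p(2,3) by linarith
    then show "\<exists>z. S y = (\<lambda>x. z + (1 - g y) *\<^sub>R x) ` S y0"
    proof cases
      case 1
      then have "y = y0" using p(4) by simp
      then show ?thesis using 1 by (intro exI[of _ 0]) simp
    next
      case 2
      have "S y = (\<lambda>x. g y *\<^sub>R k + (1 - g y) *\<^sub>R x) ` S y0"
        by (rule main[OF yP p(1) _ _ p(4) kS refl]) (use 2 in auto)
      then show ?thesis by (rule exI)
    next
      case 3
      then have yp: "y = p" using p(4) by simp
      have gp: "g p = 1" using 3 yp by simp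
      have Sy: "S y = {k}"
      proof (rule set_eqI)
        fix k'
        show "k' \<in> S y \<longleftrightarrow> k' \<in> {k}"
        proof
          assume "k' \<in> S y"
          then have "k' \<in> S p" using yp by simp
          then have "k' = k" using pt[OF p(1) gp _ kS] by simp
          then show "k' \<in> {k}" by simp
        next
          assume "k' \<in> {k}"
          then show "k' \<in> S y" using kS yp by simp
        qed
      qed
      have "(\<lambda>x. k + (1 - g y) *\<^sub>R x) ` S y0 = {k}" using 3 Sne[OF y0P] by auto
      then show ?thesis using Sy by (intro exI[of _ k]) simp
    qed
  qed
  then show ?thesis by (simp only: S_def V_def g_def P_def)
qed

end
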